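(* Let $L$ be a 3-dimensional real connected Lie group with the left-invariant almost paracontact metric structure $(\varphi,\xi,\eta,g)$ described in the context, and write $[E_i,E_j]=\sum_k C_{ij}^kE_k$. Then: (1) $L\in\mathbb G_5$ if and only if $[E_1,E_2]=C_{12}^1E_1+C_{12}^2E_2+C_{12}^3E_3$, $[E_1,E_3]=C_{13}^2E_2$, $[E_2,E_3]=C_{13}^2E_1$, with $C_{12}^3\neq0$ (then $\theta_F(\xi)=C_{12}^3$), $C_{12}^1C_{13}^2=0$, $C_{12}^2C_{13}^2=0$; (2) $L\in\mathbb G_6$ if and only if $[E_1,E_2]=C_{12}^1E_1+C_{12}^2E_2$, $[E_1,E_3]=C_{13}^1E_1+C_{13}^2E_2$, $[E_2,E_3]=C_{13}^2E_1+C_{13}^1E_2$, with $C_{13}^1\neq0$ (then $\theta^*_F(\xi)=-2C_{13}^1$), $C_{12}^2C_{13}^2-C_{13}^1C_{12}^1=0$, $C_{12}^1C_{13}^2-C_{13}^1C_{12}^2=0$; (3) $L\in\mathbb G_{10}$ if and only if $[E_1,E_2]=C_{12}^1E_1+C_{12}^2E_2$, $[E_1,E_3]=C_{13}^1E_1+C_{13}^2E_2$, $[E_2,E_3]=C_{23}^1E_1-C_{13}^1E_2$, with ($C_{13}^2\neq C_{23}^1$ or $C_{13}^1\neq0$), $C_{12}^1C_{13}^1+C_{12}^2C_{23}^1=0$, $C_{12}^1C_{13}^2-C_{12}^2C_{13}^1=0$; (4) $L\in\mathbb G_{12}$ if and only if $[E_1,E_2]=C_{12}^1E_1+C_{12}^2E_2$,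 $[E_1,E_3]=C_{13}^2E_2+C_{13}^3E_3$, $[E_2,E_3]=C_{13}^2E_1+C_{23}^3E_3$, with ($C_{13}^3\neq0$ or $C_{23}^3\neq0$), $(C_{12}^1-C_{23}^3)C_{13}^2=0$, $(C_{12}^2+C_{13}^3)C_{13}^2=0$, $(C_{12}^1-C_{23}^3)C_{13}^3+(C_{12}^2+C_{13}^3)C_{23}^3=0$.
   Context: $L$ is a 3-dimensional real connected Lie group with a basis $E_1,E_2,E_3$ of left-invariant vector fields; the structure constants $C_{ij}^k=-C_{ji}^k$ are real. The left-invariant structure is $\varphi E_1=E_2$, $\varphi E_2=E_1$, $\varphi E_3=0$, $\xi=E_3$, $\eta(E_3)=1$, $\eta(E_1)=\eta(E_2)=0$, $g(E_1,E_1)=g(E_3,E_3)=1$, $g(E_2,E_2)=-1$, $g(E_i,E_j)=0$ for $i\neq j$; this is an almost paracontact metric structure ($\varphi^2=\mathrm{id}-\eta\otimes\xi$, $\eta(\xi)=1$, $\varphi\xi=0$, $g(\varphi x,\varphi y)=-g(x,y)+\eta(x)\eta(y)$). The structure tensor is $F(x,y,z)=g((\nabla_x\varphi)y,z)$ with $\nabla$ the Levi-Civita connection of $g$; $\theta_F(x)=\sum_{i,j=1}^{2}g^{ij}F(E_i,E_j,x)$, $\theta^*_F(x)=\sum_{i,j=1}^{2}g^{ij}F(E_i,\varphi E_j,x)$ with $(g^{ij})=\mathrm{diag}(1,-1)$. Classes (conditions for all $x,y,z$, with $n=1$): $\mathbb G_5$: $F(x,y,z)=\frac{\theta_F(\xi)}{2}\{\eta(y)g(\varphi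 x,\varphi z)-\eta(z)g(\varphi x,\varphi y)\}$; $\mathbb G_6$: $F(x,y,z)=-\frac{\theta^*_F(\xi)}{2}\{\eta(y)g(x,\varphi z)-\eta(z)g(x,\varphi y)\}$; $\mathbb G_{10}$: $F(x,y,z)=-\eta(y)F(x,z,\xi)+\eta(z)F(x,y,\xi)$ and $F(x,y,\xi)=F(y,x,\xi)=F(\varphi x,\varphi y,\xi)$; $\mathbb G_{12}$: $F(x,y,z)=\eta(x)\{\eta(y)F(\xi,\xi,z)-\eta(z)F(\xi,\xi,y)\}$. "$L\in\mathbb G_i$" means that the structure tensor lies in $\mathbb G_i$ at every point and is not identically zero. *)

theory Defs
  imports Complex_Main
begin

text \<open>Index set of the basis E1, E2, E3 of left-invariant vector fields
 (the Lie algebra of L).  A left-invariant vector field (equivalently a tangent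
 vector at any point, by left translation) is a coefficient function idx => real.\<close>

datatype idx = I1 | I2 | I3

lemma UNIV_idx: "(UNIV :: idx set) = {I1, I2, I3}"
  using idx.exhaust by auto

instance idx :: finite
  by standard (simp add: UNIV_idx)

type_synonym vec = "idx \<Rightarrow> real"

definition E :: "idx \<Rightarrow> vec" where
  "E i = (\<lambda>k. if k = i then 1 else 0)"

definition vec3 :: "real \<Rightarrow> real \<Rightarrow> real \<Rightarrow> vec" where
  "vec3 a b c = (\<lambda>k. case k of I1 \<Rightarrow> a | I2 \<Rightarrow> b | I3 \<Rightarrow> c)"

text \<open>Structure constants: C i j k = C_{ij}^k, so [E_i,E_j] = sum_k C_{ij}^k E_k.\<close>

type_synonym sconst = "idx \<Rightarrow> idx \<Rightarrow> idx \<Rightarrow> real"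

definition bracket :: "sconst \<Rightarrow> vec \<Rightarrow> vec \<Rightarrow> vec" where
  "bracket C x y = (\<lambda>k. \<Sum>i\<in>UNIV. \<Sum>j\<in>UNIV. x i * y j * C i j k)"

definition lie_structure_constants :: "sconst \<Rightarrow> bool" where
  "lie_structure_constants C \<longleftrightarrow>
     (\<forall>i j k. C i j k = - C j i k) \<and>
     (\<forall>i j l m. (\<Sum>k\<in>UNIV. C i j k * C k l m + C j l k * C k i m + C l i k * C k j m) = 0)"

definition gdiag :: "idx \<Rightarrow> real" where
  "gdiag i = (if i = I2 then -1 else 1)"

definition gm :: "vec \<Rightarrow> vec \<Rightarrow> real" where
  "gm x y = (\<Sum>i\<in>UNIV. gdiag i * x i * y i)"

definition phi :: "vec \<Rightarrow> vec" where
  "phi x = vec3 (x I2) (x I1) 0"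

definition xi :: vec where
  "xi = E I3"

definition eta :: "vec \<Rightarrow> real" where
  "eta x = x I3"

text \<open>Levi-Civita connection on left-invariant fields, given by the Koszul formula
  2 g(nabla_X Y, Z) = g([X,Y],Z) - g([Y,Z],X) + g([Z,X],Y);
 the component along E_k is g(nabla_X Y, E_k) / g(E_k,E_k).\<close>

definition nabla :: "sconst \<Rightarrow> vec \<Rightarrow> vec \<Rightarrow> vec" where
  "nabla C x y = (\<lambda>k. gdiag k * ((gm (bracket C x y) (E k) - gm (bracket C y (E k)) x
                                    + gm (bracket C (E k) x) y) / 2))"

definition FF :: "sconst \<Rightarrow> vec \<Rightarrow> vec \<Rightarrow> vec \<Rightarrow> real" where
  "FF C x y z = gm (\<lambda>k. nabla C x (phi y) k - phi (nabla C x y) k) z"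

definition gInv12 :: "idx \<Rightarrow> idx \<Rightarrow> real" where
  "gInv12 i j = (if i = j then gdiag i else 0)"

definition theta :: "sconst \<Rightarrow> vec \<Rightarrow> real" where
  "theta C x = (\<Sum>i\<in>{I1, I2}. \<Sum>j\<in>{I1, I2}. gInv12 i j * FF C (E i) (E j) x)"

definition theta_star :: "sconst \<Rightarrow> vec \<Rightarrow> real" where
  "theta_star C x = (\<Sum>i\<in>{I1, I2}. \<Sum>j\<in>{I1, I2}. gInv12 i j * FF C (E i) (phi (E j)) x)"

definition F_nonzero :: "sconst \<Rightarrow> bool" where
  "F_nonzero C \<longleftrightarrow> (\<exists>x y z. FF C x y z \<noteq> 0)"

definition inG5 :: "sconst \<Rightarrow> bool" where
  "inG5 C \<longleftrightarrow> F_nonzero C \<and>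
     (\<forall>x y z. FF C x y z = theta C xi / 2 *
        (eta y * gm (phi x) (phi z) - eta z * gm (phi x) (phi y)))"

definition inG6 :: "sconst \<Rightarrow> bool" where
  "inG6 C \<longleftrightarrow> F_nonzero C \<and>
     (\<forall>x y z. FF C x y z = - (theta_star C xi / 2) *
        (eta y * gm x (phi z) - eta z * gm x (phi y)))"

definition inG10 :: "sconst \<Rightarrow> bool" where
  "inG10 C \<longleftrightarrow> F_nonzero C \<and>
     (\<forall>x y z. FF C x y z = - eta y * FF C x z xi + eta z * FF C x y xi) \<and>
     (\<forall>x y. FF C x y xi = FF C y x xi \<and> FF C y x xi = FF C (phi x) (phi y) xi)"

definition inG12 :: "sconst \<Rightarrow> bool" where
  "inG12 C \<longleftrightarrow> F_nonzero C \<and>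
     (\<forall>x y z. FF C x y z = eta x * (eta y * FF C xi xi z - eta z * FF C xi xi y))"

end

theory Submission
  imports Defs
begin



lemma antisym_facts:
  assumes "lie_structure_constants C"
  shows "C i i k = 0" "C I2 I1 k = - C I1 I2 k" "C I3 I1 k = - C I1 I3 k" "C I3 I2 k = - C I2 I3 k"
  using assms unfolding lie_structure_constants_def by (metis neg_equal_zero)+

lemma sum_idx: "(\<Sum>i\<in>UNIV. f i) = f I1 + f I2 + (f I3::real)"
  by (simp add: UNIV_idx)

lemma FF_expand:
  assumes "lie_structure_constants C"
  shows "FF C x y z =
    x I1 * (y I1 * z I3 - y I3 * z I1) * ((C I1 I2 I3 + C I1 I3 I2 - C I2 I3 I1)/2)
  + x I1 * (y I3 * z I2 - y I2 * z I3) * C I1 I3 I1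
  + x I2 * (y I1 * z I3 - y I3 * z I1) * C I2 I3 I2
  + x I2 * (y I2 * z I3 - y I3 * z I2) * ((C I1 I3 I2 - C I2 I3 I1 - C I1 I2 I3)/2)
  + x I3 * (y I3 * z I1 - y I1 * z I3) * C I2 I3 I3
  + x I3 * (y I3 * z I2 - y I2 * z I3) * C I1 I3 I3"
  unfolding FF_def gm_def nabla_def bracket_def phi_def vec3_def E_def sum_idx gdiag_def
  using antisym_facts[OF assms]
  by (simp add: algebra_simps divide_simps)

lemma bracket_E: "bracket C (E i) (E j) = (\<lambda>k. C i j k)"
  by (cases i; cases j) (auto simp: bracket_def E_def sum_idx)

lemma vec3_eq: "(f = vec3 a b c) \<longleftrightarrow> f I1 = a \<and> f I2 = b \<and> f I3 = c"
  by (auto simp: vec3_def fun_eq_iff split: idx.split)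

lemma jac:
  assumes "lie_structure_constants C"
  shows "(C I1 I2 I1 - C I2 I3 I3) * C I1 I3 m + (C I1 I2 I2 + C I1 I3 I3) * C I2 I3 m
         - (C I1 I3 I1 + C I2 I3 I2) * C I1 I2 m = 0"
proof -
  have "(\<Sum>k\<in>UNIV. C I1 I2 k * C k I3 m + C I2 I3 k * C k I1 m + C I3 I1 k * C k I2 m) = 0"
    using assms unfolding lie_structure_constants_def by blast
  then show ?thesis using antisym_facts[OF assms] by (simp add: sum_idx algebra_simps)
qed

lemma theta_xi: assumes "lie_structure_constants C" shows "theta C xi = C I1 I2 I3"
  unfolding theta_def FF_expand[OF assms] by (simp add: E_def xi_def gInv12_def gdiag_def field_simps)

lemma theta_star_xi: assumes "lie_structure_constants C"
  shows "theta_star C xi = - C I1 I3 I1 - C I2 I3 I2"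
  unfolding theta_star_def FF_expand[OF assms] by (simp add: E_def xi_def gInv12_def gdiag_def phi_def vec3_def)

lemma Fnz: assumes "lie_structure_constants C"
  shows "F_nonzero C \<longleftrightarrow> (C I1 I2 I3 + C I1 I3 I2 - C I2 I3 I1 \<noteq> 0 \<or> C I1 I3 I2 - C I2 I3 I1 - C I1 I2 I3 \<noteq> 0
     \<or> C I1 I3 I1 \<noteq> 0 \<or> C I2 I3 I2 \<noteq> 0 \<or> C I2 I3 I3 \<noteq> 0 \<or> C I1 I3 I3 \<noteq> 0)"
proof
  assume "F_nonzero C"
  then obtain x y z where "FF C x y z \<noteq> 0" unfolding F_nonzero_def by blast
  then show "(C I1 I2 I3 + C I1 I3 I2 - C I2 I3 I1 \<noteq> 0 \<or> C I1 I3 I2 - C I2 I3 I1 - C I1 I2 I3 \<noteq> 0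
     \<or> C I1 I3 I1 \<noteq> 0 \<or> C I2 I3 I2 \<noteq> 0 \<or> C I2 I3 I3 \<noteq> 0 \<or> C I1 I3 I3 \<noteq> 0)"
    unfolding FF_expand[OF assms] by auto
next
  have e: "\<And>i j k. FF C (E i) (E j) (E k) \<noteq> 0 \<Longrightarrow> F_nonzero C" unfolding F_nonzero_def by blast
  assume "(C I1 I2 I3 + C I1 I3 I2 - C I2 I3 I1 \<noteq> 0 \<or> C I1 I3 I2 - C I2 I3 I1 - C I1 I2 I3 \<noteq> 0
     \<or> C I1 I3 I1 \<noteq> 0 \<or> C I2 I3 I2 \<noteq> 0 \<or> C I2 I3 I3 \<noteq> 0 \<or> C I1 I3 I3 \<noteq> 0)"
  then show "F_nonzero C"
    using e[of I1 I1 I3] e[of I2 I2 I3] e[of I1 I2 I3] e[of I2 I1 I3] e[of I3 I1 I3] e[of I3 I2 I3]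
    unfolding FF_expand[OF assms] by (auto simp: E_def)
qed

lemma G5c: assumes "lie_structure_constants C"
  shows "(\<forall>x y z. FF C x y z = theta C xi / 2 *
        (eta y * gm (phi x) (phi z) - eta z * gm (phi x) (phi y))) \<longleftrightarrow>
   C I1 I3 I1 = 0 \<and> C I2 I3 I2 = 0 \<and> C I2 I3 I3 = 0 \<and> C I1 I3 I3 = 0 \<and> C I1 I3 I2 = C I2 I3 I1"
proof
  assume a: "\<forall>x y z. FF C x y z = theta C xi / 2 *
        (eta y * gm (phi x) (phi z) - eta z * gm (phi x) (phi y))"
  have h: "\<And>i j k. FF C (E i) (E j) (E k) = theta C xi / 2 *
        (eta (E j) * gm (phi (E i)) (phi (E k)) - eta (E k) * gm (phi (E i)) (phi (E j)))"
    using a by blast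
  show "C I1 I3 I1 = 0 \<and> C I2 I3 I2 = 0 \<and> C I2 I3 I3 = 0 \<and> C I1 I3 I3 = 0 \<and> C I1 I3 I2 = C I2 I3 I1"
    using h[of I1 I1 I3] h[of I1 I2 I3] h[of I2 I1 I3] h[of I3 I1 I3] h[of I3 I2 I3]
    unfolding FF_expand[OF assms] theta_xi[OF assms]
    by (simp add: E_def eta_def gm_def phi_def vec3_def sum_idx gdiag_def field_simps)
next
  assume "C I1 I3 I1 = 0 \<and> C I2 I3 I2 = 0 \<and> C I2 I3 I3 = 0 \<and> C I1 I3 I3 = 0 \<and> C I1 I3 I2 = C I2 I3 I1"
  then show "\<forall>x y z. FF C x y z = theta C xi / 2 *
        (eta y * gm (phi x) (phi z) - eta z * gm (phi x) (phi y))"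
    unfolding FF_expand[OF assms] theta_xi[OF assms]
    by (simp add: eta_def gm_def phi_def vec3_def sum_idx gdiag_def field_simps)
qed

lemma G6c: assumes "lie_structure_constants C"
  shows "(\<forall>x y z. FF C x y z = - (theta_star C xi / 2) *
        (eta y * gm x (phi z) - eta z * gm x (phi y))) \<longleftrightarrow>
   C I1 I2 I3 = 0 \<and> C I1 I3 I2 = C I2 I3 I1 \<and> C I2 I3 I2 = C I1 I3 I1 \<and> C I2 I3 I3 = 0 \<and> C I1 I3 I3 = 0"
proof
  assume a: "\<forall>x y z. FF C x y z = - (theta_star C xi / 2) *
        (eta y * gm x (phi z) - eta z * gm x (phi y))"
  have h: "\<And>i j k. FF C (E i) (E j) (E k) = - (theta_star C xi / 2) *
        (eta (E j) * gm (E i) (phi (E k)) - eta (E k) * gm (E i) (phi (E j)))"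
    using a by blast
  show "C I1 I2 I3 = 0 \<and> C I1 I3 I2 = C I2 I3 I1 \<and> C I2 I3 I2 = C I1 I3 I1 \<and> C I2 I3 I3 = 0 \<and> C I1 I3 I3 = 0"
    using h[of I1 I1 I3] h[of I1 I2 I3] h[of I2 I2 I3] h[of I3 I1 I3] h[of I3 I2 I3]
    unfolding FF_expand[OF assms] theta_star_xi[OF assms]
    by (simp add: E_def eta_def gm_def phi_def vec3_def sum_idx gdiag_def field_simps)
next
  assume "C I1 I2 I3 = 0 \<and> C I1 I3 I2 = C I2 I3 I1 \<and> C I2 I3 I2 = C I1 I3 I1 \<and> C I2 I3 I3 = 0 \<and> C I1 I3 I3 = 0"
  then show "\<forall>x y z. FF C x y z = - (theta_star C xi / 2) *
        (eta y * gm x (phi z) - eta z * gm x (phi y))"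
    unfolding FF_expand[OF assms] theta_star_xi[OF assms]
    by (simp add: eta_def gm_def phi_def vec3_def sum_idx gdiag_def field_simps)
qed

lemma G10c: assumes "lie_structure_constants C"
  shows "((\<forall>x y z. FF C x y z = - eta y * FF C x z xi + eta z * FF C x y xi) \<and>
     (\<forall>x y. FF C x y xi = FF C y x xi \<and> FF C y x xi = FF C (phi x) (phi y) xi)) \<longleftrightarrow>
   C I1 I2 I3 = 0 \<and> C I2 I3 I2 = - C I1 I3 I1 \<and> C I2 I3 I3 = 0 \<and> C I1 I3 I3 = 0"
proof
  assume a: "(\<forall>x y z. FF C x y z = - eta y * FF C x z xi + eta z * FF C x y xi) \<and>
     (\<forall>x y. FF C x y xi = FF C y x xi \<and> FF C y x xi = FF C (phi x) (phi y) xi)"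
  have h: "\<And>i j. FF C (E i) (E j) xi = FF C (E j) (E i) xi \<and> FF C (E j) (E i) xi = FF C (phi (E i)) (phi (E j)) xi"
    using a by blast
  show "C I1 I2 I3 = 0 \<and> C I2 I3 I2 = - C I1 I3 I1 \<and> C I2 I3 I3 = 0 \<and> C I1 I3 I3 = 0"
    using h[of I1 I2] h[of I1 I1] h[of I1 I3] h[of I2 I3]
    unfolding FF_expand[OF assms]
    by (simp add: E_def xi_def phi_def vec3_def field_simps)
next
  assume "C I1 I2 I3 = 0 \<and> C I2 I3 I2 = - C I1 I3 I1 \<and> C I2 I3 I3 = 0 \<and> C I1 I3 I3 = 0"
  then show "(\<forall>x y z. FF C x y z = - eta y * FF C x z xi + eta z * FF C x y xi) \<and>
     (\<forall>x y. FF C x y xi = FF C y x xi \<and> FF C y x xi = FF C (phi x) (phi y) xi)"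
    unfolding FF_expand[OF assms]
    by (simp add: eta_def xi_def E_def phi_def vec3_def field_simps)
qed

lemma G12c: assumes "lie_structure_constants C"
  shows "(\<forall>x y z. FF C x y z = eta x * (eta y * FF C xi xi z - eta z * FF C xi xi y)) \<longleftrightarrow>
   C I1 I2 I3 = 0 \<and> C I1 I3 I2 = C I2 I3 I1 \<and> C I1 I3 I1 = 0 \<and> C I2 I3 I2 = 0"
proof
  assume a: "\<forall>x y z. FF C x y z = eta x * (eta y * FF C xi xi z - eta z * FF C xi xi y)"
  have h: "\<And>i j k. FF C (E i) (E j) (E k) = eta (E i) * (eta (E j) * FF C xi xi (E k) - eta (E k) * FF C xi xi (E j))"
    using a by blast
  show "C I1 I2 I3 = 0 \<and> C I1 I3 I2 = C I2 I3 I1 \<and> C I1 I3 I1 = 0 \<and> C I2 I3 I2 = 0"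
    using h[of I1 I1 I3] h[of I1 I2 I3] h[of I2 I2 I3] h[of I2 I1 I3]
    unfolding FF_expand[OF assms]
    by (simp add: E_def eta_def xi_def field_simps)
next
  assume "C I1 I2 I3 = 0 \<and> C I1 I3 I2 = C I2 I3 I1 \<and> C I1 I3 I1 = 0 \<and> C I2 I3 I2 = 0"
  then show "\<forall>x y z. FF C x y z = eta x * (eta y * FF C xi xi z - eta z * FF C xi xi y)"
    unfolding FF_expand[OF assms]
    by (simp add: eta_def xi_def E_def field_simps)
qed

theorem theorem4p1:
  fixes C :: sconst
  assumes "lie_structure_constants C"
  shows
   "(inG5 C \<longleftrightarrow>
       bracket C (E I1) (E I2) = vec3 (C I1 I2 I1) (C I1 I2 I2) (C I1 I2 I3) \<and>
       bracket C (E I1) (E I3) = vec3 0 (C I1 I3 I2) 0 \<and>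
       bracket C (E I2) (E I3) = vec3 (C I1 I3 I2) 0 0 \<and>
       C I1 I2 I3 \<noteq> 0 \<and> C I1 I2 I1 * C I1 I3 I2 = 0 \<and> C I1 I2 I2 * C I1 I3 I2 = 0)
  \<and> (inG5 C \<longrightarrow> theta C xi = C I1 I2 I3)
  \<and> (inG6 C \<longleftrightarrow>
       bracket C (E I1) (E I2) = vec3 (C I1 I2 I1) (C I1 I2 I2) 0 \<and>
       bracket C (E I1) (E I3) = vec3 (C I1 I3 I1) (C I1 I3 I2) 0 \<and>
       bracket C (E I2) (E I3) = vec3 (C I1 I3 I2) (C I1 I3 I1) 0 \<and>
       C I1 I3 I1 \<noteq> 0 \<and>
       C I1 I2 I2 * C I1 I3 I2 - C I1 I3 I1 * C I1 I2 I1 = 0 \<and>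
       C I1 I2 I1 * C I1 I3 I2 - C I1 I3 I1 * C I1 I2 I2 = 0)
  \<and> (inG6 C \<longrightarrow> theta_star C xi = - 2 * C I1 I3 I1)
  \<and> (inG10 C \<longleftrightarrow>
       bracket C (E I1) (E I2) = vec3 (C I1 I2 I1) (C I1 I2 I2) 0 \<and>
       bracket C (E I1) (E I3) = vec3 (C I1 I3 I1) (C I1 I3 I2) 0 \<and>
       bracket C (E I2) (E I3) = vec3 (C I2 I3 I1) (- C I1 I3 I1) 0 \<and>
       (C I1 I3 I2 \<noteq> C I2 I3 I1 \<or> C I1 I3 I1 \<noteq> 0) \<and>
       C I1 I2 I1 * C I1 I3 I1 + C I1 I2 I2 * C I2 I3 I1 = 0 \<and>
       C I1 I2 I1 * C I1 I3 I2 - C I1 I2 I2 * C I1 I3 I1 = 0)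
  \<and> (inG12 C \<longleftrightarrow>
       bracket C (E I1) (E I2) = vec3 (C I1 I2 I1) (C I1 I2 I2) 0 \<and>
       bracket C (E I1) (E I3) = vec3 0 (C I1 I3 I2) (C I1 I3 I3) \<and>
       bracket C (E I2) (E I3) = vec3 (C I1 I3 I2) 0 (C I2 I3 I3) \<and>
       (C I1 I3 I3 \<noteq> 0 \<or> C I2 I3 I3 \<noteq> 0) \<and>
       (C I1 I2 I1 - C I2 I3 I3) * C I1 I3 I2 = 0 \<and>
       (C I1 I2 I2 + C I1 I3 I3) * C I1 I3 I2 = 0 \<and>
       (C I1 I2 I1 - C I2 I3 I3) * C I1 I3 I3 + (C I1 I2 I2 + C I1 I3 I3) * C I2 I3 I3 = 0)"
proof -
  note J = jac[OF assms, of I1] jac[OF assms, of I2] jac[OF assms, of I3]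
  note U = inG5_def inG6_def inG10_def inG12_def G5c[OF assms] G6c[OF assms] G10c[OF assms] G12c[OF assms]
    Fnz[OF assms] bracket_E vec3_eq
  show ?thesis
  proof (intro conjI)
    show "inG5 C \<longleftrightarrow>
       bracket C (E I1) (E I2) = vec3 (C I1 I2 I1) (C I1 I2 I2) (C I1 I2 I3) \<and>
       bracket C (E I1) (E I3) = vec3 0 (C I1 I3 I2) 0 \<and>
       bracket C (E I2) (E I3) = vec3 (C I1 I3 I2) 0 0 \<and>
       C I1 I2 I3 \<noteq> 0 \<and> C I1 I2 I1 * C I1 I3 I2 = 0 \<and> C I1 I2 I2 * C I1 I3 I2 = 0"
      unfolding U using J by auto
  next
    show "inG5 C \<longrightarrow> theta C xi = C I1 I2 I3" using theta_xi[OF assms] by auto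
  next
    show "inG6 C \<longleftrightarrow>
       bracket C (E I1) (E I2) = vec3 (C I1 I2 I1) (C I1 I2 I2) 0 \<and>
       bracket C (E I1) (E I3) = vec3 (C I1 I3 I1) (C I1 I3 I2) 0 \<and>
       bracket C (E I2) (E I3) = vec3 (C I1 I3 I2) (C I1 I3 I1) 0 \<and>
       C I1 I3 I1 \<noteq> 0 \<and>
       C I1 I2 I2 * C I1 I3 I2 - C I1 I3 I1 * C I1 I2 I1 = 0 \<and>
       C I1 I2 I1 * C I1 I3 I2 - C I1 I3 I1 * C I1 I2 I2 = 0"
      unfolding U using J by (auto simp: algebra_simps)
  next
    show "inG6 C \<longrightarrow> theta_star C xi = - 2 * C I1 I3 I1" using theta_star_xi[OF assms] unfolding U by auto
  next
    show "inG10 C \<longleftrightarrow>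
       bracket C (E I1) (E I2) = vec3 (C I1 I2 I1) (C I1 I2 I2) 0 \<and>
       bracket C (E I1) (E I3) = vec3 (C I1 I3 I1) (C I1 I3 I2) 0 \<and>
       bracket C (E I2) (E I3) = vec3 (C I2 I3 I1) (- C I1 I3 I1) 0 \<and>
       (C I1 I3 I2 \<noteq> C I2 I3 I1 \<or> C I1 I3 I1 \<noteq> 0) \<and>
       C I1 I2 I1 * C I1 I3 I1 + C I1 I2 I2 * C I2 I3 I1 = 0 \<and>
       C I1 I2 I1 * C I1 I3 I2 - C I1 I2 I2 * C I1 I3 I1 = 0"
      unfolding U using J by (auto simp: algebra_simps)
  next
    show "inG12 C \<longleftrightarrow>
       bracket C (E I1) (E I2) = vec3 (C I1 I2 I1) (C I1 I2 I2) 0 \<and>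
       bracket C (E I1) (E I3) = vec3 0 (C I1 I3 I2) (C I1 I3 I3) \<and>
       bracket C (E I2) (E I3) = vec3 (C I1 I3 I2) 0 (C I2 I3 I3) \<and>
       (C I1 I3 I3 \<noteq> 0 \<or> C I2 I3 I3 \<noteq> 0) \<and>
       (C I1 I2 I1 - C I2 I3 I3) * C I1 I3 I2 = 0 \<and>
       (C I1 I2 I2 + C I1 I3 I3) * C I1 I3 I2 = 0 \<and>
       (C I1 I2 I1 - C I2 I3 I3) * C I1 I3 I3 + (C I1 I2 I2 + C I1 I3 I3) * C I2 I3 I3 = 0"
      unfolding U using J by (auto simp: algebra_simps)
  qed
qed

end
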